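(* Let $m\ge 2$ be an integer and let $c>1$ be a real number which is not an integer. Then the sequence $x=(\lfloor n^c\rfloor \bmod m)_{n}$ is not normal. More precisely, there exist a positive integer $k$ and a block $B\in\{0,1,\ldots,m-1\}^k$ which does not appear in $x$ (i.e. there is no $n$ with $(x_n,x_{n+1},\ldots,x_{n+k-1})=B$).
   Context: A sequence $(v_n)_n$ with values in $\{0,1,\ldots,m-1\}$ is called $k$-normal if for every block $B\in\{0,\ldots,m-1\}^k$ one has $\lim_{N\to\infty}\frac1N\operatorname{Card}\{n<N: (v_n,\ldots,v_{n+k-1})=B\}=m^{-k}$; it is called normal if it is $k$-normal for every positive integer $k$. *)

theory Defs
  imports "HOL-Analysis.Analysis"
begin

definition block_at :: "(nat \<Rightarrow> nat) \<Rightarrow> nat \<Rightarrow> nat \<Rightarrow> nat list" where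
  "block_at v k n = map (\<lambda>i. v (n + i)) [0..<k]"

definition k_normal :: "nat \<Rightarrow> nat \<Rightarrow> (nat \<Rightarrow> nat) \<Rightarrow> bool" where
  "k_normal m k v \<longleftrightarrow>
     (\<forall>B. length B = k \<and> set B \<subseteq> {0..<m} \<longrightarrow>
        (\<lambda>N. real (card {n. n < N \<and> block_at v k n = B}) / real N)
          \<longlonglongrightarrow> 1 / real m ^ k)"

definition normal_seq :: "nat \<Rightarrow> (nat \<Rightarrow> nat) \<Rightarrow> bool" where
  "normal_seq m v \<longleftrightarrow> (\<forall>k>0. k_normal m k v)"

end

theory Submission
  imports Defs "HOL-Real_Asymp.Real_Asymp"
begin


definition ipi :: "nat set \<Rightarrow> nat \<Rightarrow> int" where
  "ipi X x = (\<Prod>z\<in>X-{x}. int x - int z)"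

definition DD :: "nat set \<Rightarrow> (nat \<Rightarrow> real) \<Rightarrow> real" where
  "DD X g = (\<Sum>x\<in>X. g x / of_int (ipi X x))"

lemma ipi_nz: "ipi X x \<noteq> 0"
  unfolding ipi_def by (cases "finite X") auto

lemma ipi_insert: "x \<noteq> u \<Longrightarrow> u \<notin> W \<Longrightarrow> finite W \<Longrightarrow>
   ipi (insert u W) x = ipi W x * (int x - int u)"
proof -
  assume a: "x \<noteq> u" "u \<notin> W" "finite W"
  have "insert u W - {x} = insert u (W - {x})" using a by auto
  then show ?thesis unfolding ipi_def using a by (simp add: mult.commute)
qed

lemma ipi_insert_self: "u \<notin> W \<Longrightarrow> ipi (insert u W) u = ipi W u"
proof -
  assume "u \<notin> W"
  have "insert u W - {u} = W - {u}" by auto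
  then show ?thesis unfolding ipi_def by simp
qed

lemma DD_insert_expand: "finite W \<Longrightarrow> u \<notin> W \<Longrightarrow>
  DD (insert u W) g = g u / of_int (ipi W u) + (\<Sum>x\<in>W. g x / (of_int (ipi W x) * (real x - real u)))"
  unfolding DD_def
  apply (simp add: ipi_insert_self)
  apply (rule sum.cong, simp)
  apply (subst ipi_insert, auto)
  done

lemma aux_alg: "(d::real) \<noteq> 0 \<Longrightarrow> p \<noteq> 0 \<Longrightarrow> p2 \<noteq> 0 \<Longrightarrow>
   d * (a / (p * d) + (b / (p2 * (- d)) + s)) = a / p - b / p2 + d * s"
  by (simp add: field_simps)

lemma aux_alg2: "(P::real) \<noteq> 0 \<Longrightarrow> A \<noteq> 0 \<Longrightarrow> B \<noteq> 0 \<Longrightarrow>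
   g / (P * A) - g / (P * B) = (B - A) * (g / (P * B * A))"
  by (simp add: field_simps)

lemma DD_rec:
  assumes "finite W" "u \<notin> W" "v \<notin> W" "u \<noteq> v"
  shows "DD (insert u W) g - DD (insert v W) g = (real u - real v) * DD (insert u (insert v W)) g"
proof -
  have i1: "ipi (insert u (insert v W)) u = ipi W u * (int u - int v)"
    using assms by (simp add: ipi_insert_self ipi_insert)
  have i2: "ipi (insert u (insert v W)) v = ipi W v * (int v - int u)"
    using assms by (simp add: ipi_insert_self ipi_insert)
  have i3: "x \<in> W \<Longrightarrow> ipi (insert u (insert v W)) x = ipi W x * (int x - int v) * (int x - int u)" for x
  proof -
    assume x: "x \<in> W"
    have "x \<noteq> u" "x \<noteq> v" using x assms by auto
    then show ?thesis using assms
      by (simp add: ipi_insert[of x u "insert v W"] ipi_insert[of x v W])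
  qed
  have e1: "DD (insert u (insert v W)) g = g u / (of_int (ipi W u) * (real u - real v))
      + (g v / (of_int (ipi W v) * (-(real u - real v)))
      + (\<Sum>x\<in>W. g x / (of_int (ipi W x) * (real x - real v) * (real x - real u))))"
    using assms unfolding DD_def
    apply (simp only: sum.insert finite_insert insert_iff simp_thms)
    apply (simp add: i1 i2 i3)
    done
  have s: "(\<Sum>x\<in>W. g x / (of_int (ipi W x) * (real x - real u))) - (\<Sum>x\<in>W. g x / (of_int (ipi W x) * (real x - real v)))
     = (real u - real v) * (\<Sum>x\<in>W. g x / (of_int (ipi W x) * (real x - real v) * (real x - real u)))"
    unfolding sum_subtractf[symmetric] sum_distrib_left
  proof (rule sum.cong, simp)
    fix x assume x: "x \<in> W"
    have "x \<noteq> u" "x \<noteq> v" using x assms by auto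
    then have h1: "real x - real u \<noteq> 0" and h2: "real x - real v \<noteq> 0" by auto
    have h3: "(of_int (ipi W x)::real) \<noteq> 0" using ipi_nz by simp
    note aux_alg2[OF h3 h1 h2, of "g x"]
    moreover have "(real x - real v) - (real x - real u) = real u - real v" by simp
    ultimately show "g x / (of_int (ipi W x) * (real x - real u)) - g x / (of_int (ipi W x) * (real x - real v)) =
         (real u - real v) * (g x / (of_int (ipi W x) * (real x - real v) * (real x - real u)))"
      by metis
  qed
  have d: "real u - real v \<noteq> 0" using assms by simp
  have p: "(of_int (ipi W u)::real) \<noteq> 0" "(of_int (ipi W v)::real) \<noteq> 0" using ipi_nz by auto
  show ?thesis
    unfolding e1 aux_alg[OF d p] DD_insert_expand[OF assms(1,2)] DD_insert_expand[OF assms(1,3)]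
    using s by simp
qed

lemma DD_three:
  assumes "finite X" "a \<in> X" "b \<in> X" "a \<noteq> b" "y \<notin> X"
  shows "(real b - real a) * DD X g = (real b - real y) * DD (insert b (insert y (X - {a,b}))) g
          + (real y - real a) * DD (insert a (insert y (X - {a,b}))) g"
proof -
  define Z where "Z = X - {a,b}"
  have fZ: "finite Z" using assms Z_def by auto
  have nZ: "a \<notin> Z" "b \<notin> Z" "y \<notin> Z" using assms Z_def by auto
  have X1: "insert a (insert b Z) = X" "insert b (insert a Z) = X" using assms Z_def by auto
  have yab: "y \<noteq> a" "y \<noteq> b" using assms by auto
  have r1: "DD (insert a (insert b Z)) g - DD (insert y (insert b Z)) g
      = (real a - real y) * DD (insert a (insert y (insert b Z))) g"
    using DD_rec[of "insert b Z" a y g] fZ nZ yab assms by auto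
  have r2: "DD (insert b (insert a Z)) g - DD (insert y (insert a Z)) g
      = (real b - real y) * DD (insert b (insert y (insert a Z))) g"
    using DD_rec[of "insert a Z" b y g] fZ nZ yab assms by auto
  have s1: "insert a (insert y (insert b Z)) = insert y X" "insert b (insert y (insert a Z)) = insert y X"
     "insert a (insert b (insert y Z)) = insert y X" "insert b (insert a (insert y Z)) = insert y X"
    using X1 by auto
  have s2: "insert y (insert b Z) = insert b (insert y Z)" "insert y (insert a Z) = insert a (insert y Z)" by auto
  have q1: "DD (insert b (insert y Z)) g = DD X g - (real a - real y) * DD (insert y X) g"
    using r1 unfolding X1 s1 s2 by simp
  have q2: "DD (insert a (insert y Z)) g = DD X g - (real b - real y) * DD (insert y X) g"
    using r2 unfolding X1 s1 s2 by simp
  show ?thesis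
    unfolding Z_def[symmetric] q1 q2
    by (simp add: algebra_simps)
qed

lemma DD_bound:
  assumes H: "\<forall>l. A \<le> l \<longrightarrow> l + k \<le> B \<longrightarrow> lo \<le> DD {l..l+k} g \<and> DD {l..l+k} g \<le> hi"
  shows "card X = Suc k \<Longrightarrow> X \<subseteq> {A..B} \<Longrightarrow> lo \<le> DD X g \<and> DD X g \<le> hi"
proof (induction "Max X - Min X" arbitrary: X rule: less_induct)
  case less
  have fX: "finite X" "X \<noteq> {}" using less.prems card.infinite by fastforce+
  define a where "a = Min X"
  define b where "b = Max X"
  have aX: "a \<in> X" "b \<in> X" using fX a_def b_def by auto
  have Xab: "X \<subseteq> {a..b}" using fX a_def b_def by auto
  show ?case
  proof (cases "X = {a..b}")
    case True
    then have "b = a + k" using less.prems(1) by simp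
    moreover have "A \<le> a" "b \<le> B" using aX less.prems(2) by auto
    ultimately show ?thesis using H True by auto
  next
    case False
    have "\<not> {a..b} \<subseteq> X" using False Xab by auto
    then obtain y where y: "y \<in> {a..b}" "y \<notin> X" by blast
    then have ay: "a < y" "y < b" using aX by (auto simp: order.order_iff_strict)
    define Z where "Z = X - {a,b}"
    have ab: "a \<noteq> b" using ay by simp
    have c2': "card {a,b} = 2" using ab by simp
    have sub: "{a,b} \<subseteq> X" using aX by simp
    have cZ: "card Z = k - 1" unfolding Z_def using card_Diff_subset[OF _ sub] c2' less.prems(1) by simp
    have k1: "k \<ge> 1" using card_mono[OF fX(1) sub] c2' less.prems(1) by simp
    have Zin: "Z \<subseteq> {Suc a..b - 1}"
    proof
      fix x assume "x \<in> Z"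
      then have "x \<in> X" "x \<noteq> a" "x \<noteq> b" unfolding Z_def by auto
      then show "x \<in> {Suc a..b - 1}" using Xab by fastforce
    qed
    define X1 where "X1 = insert b (insert y Z)"
    define X2 where "X2 = insert a (insert y Z)"
    have fZ: "finite Z" using fX Z_def by auto
    have nZ: "a \<notin> Z" "b \<notin> Z" "y \<notin> Z" using y Z_def by auto
    have c1: "card X1 = Suc k" unfolding X1_def using fZ nZ cZ k1 ay by simp
    have c2: "card X2 = Suc k" unfolding X2_def using fZ nZ cZ k1 ay by simp
    have X1s: "X1 \<subseteq> {Suc a..b}" unfolding X1_def using Zin ay by (force simp: subset_iff)
    have X2s: "X2 \<subseteq> {a..b - 1}" unfolding X2_def using Zin ay by (force simp: subset_iff)
    have AB: "{a..b} \<subseteq> {A..B}" using aX less.prems(2) by auto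
    have m1: "Max X1 - Min X1 < Max X - Min X"
    proof -
      have f: "finite X1" "X1 \<noteq> {}" unfolding X1_def using fZ by auto
      have "Max X1 \<in> {Suc a..b}" "Min X1 \<in> {Suc a..b}" using Max_in[OF f] Min_in[OF f] using X1s by auto
      then have "Max X1 \<le> b" "Min X1 \<ge> Suc a" by auto
      then show ?thesis using a_def b_def ay by linarith
    qed
    have m2: "Max X2 - Min X2 < Max X - Min X"
    proof -
      have f: "finite X2" "X2 \<noteq> {}" unfolding X2_def using fZ by auto
      have "Max X2 \<in> {a..b - 1}" "Min X2 \<in> {a..b - 1}" using Max_in[OF f] Min_in[OF f] using X2s by auto
      then have "Max X2 \<le> b - 1" "Min X2 \<ge> a" by auto
      then show ?thesis using a_def b_def ay by linarith
    qed
    have "{Suc a..b} \<subseteq> {a..b}" "{a..b-1} \<subseteq> {a..b}" by auto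
    then have XX: "X1 \<subseteq> {A..B}" "X2 \<subseteq> {A..B}" using X1s X2s AB by (meson subset_trans)+
    have I1: "lo \<le> DD X1 g \<and> DD X1 g \<le> hi"
      using less.hyps[OF m1 c1] XX by auto
    have I2: "lo \<le> DD X2 g \<and> DD X2 g \<le> hi"
      using less.hyps[OF m2 c2] XX by auto
    have eq: "(real b - real a) * DD X g = (real b - real y) * DD X1 g + (real y - real a) * DD X2 g"
      using DD_three[OF fX(1) aX ab y(2), of g] unfolding X1_def X2_def Z_def by simp
    have p1: "real b - real y > 0" "real y - real a > 0" using ay by auto
    have "(real b - real a) * lo \<le> (real b - real a) * DD X g"
    proof -
      have "(real b - real y) * lo \<le> (real b - real y) * DD X1 g" using I1 p1 by simp
      moreover have "(real y - real a) * lo \<le> (real y - real a) * DD X2 g" using I2 p1 by simp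
      ultimately show ?thesis unfolding eq by (simp add: algebra_simps)
    qed
    moreover have "(real b - real a) * DD X g \<le> (real b - real a) * hi"
    proof -
      have "(real b - real y) * DD X1 g \<le> (real b - real y) * hi" using I1 p1 by simp
      moreover have "(real y - real a) * DD X2 g \<le> (real y - real a) * hi" using I2 p1 by simp
      ultimately show ?thesis unfolding eq by (simp add: algebra_simps)
    qed
    moreover have "real b - real a > 0" using ay by simp
    ultimately show ?thesis by simp
  qed
qed

lemma DD_single: "DD {l} g = g l"
  unfolding DD_def ipi_def by simp

lemma DD_cons_rec: "DD {Suc l..Suc (l+k)} g - DD {l..l+k} g = (real k + 1) * DD {l..Suc (l+k)} g"
proof -
  have "DD (insert (Suc (l+k)) {Suc l..l+k}) g - DD (insert l {Suc l..l+k}) g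
     = (real (Suc (l+k)) - real l) * DD (insert (Suc (l+k)) (insert l {Suc l..l+k})) g"
    by (rule DD_rec) auto
  moreover have "insert (Suc (l+k)) {Suc l..l+k} = {Suc l..Suc (l+k)}" by auto
  moreover have "insert l {Suc l..l+k} = {l..l+k}" by auto
  moreover have "insert (Suc (l+k)) (insert l {Suc l..l+k}) = {l..Suc (l+k)}" by auto
  ultimately show ?thesis by simp
qed

lemma DD_shift: "DD (Suc ` X) g = DD X (\<lambda>i. g (Suc i))"
proof -
  have ip: "ipi (Suc ` X) (Suc x) = ipi X x" if "x \<in> X" for x
  proof -
    have "Suc ` X - {Suc x} = Suc ` (X - {x})" by auto
    then have "ipi (Suc ` X) (Suc x) = (\<Prod>z\<in>Suc ` (X - {x}). int (Suc x) - int z)"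
      unfolding ipi_def by simp
    also have "\<dots> = (\<Prod>z\<in>X - {x}. int (Suc x) - int (Suc z))"
      by (rule prod.reindex_cong[of Suc]) auto
    also have "\<dots> = ipi X x" unfolding ipi_def by simp
    finally show ?thesis .
  qed
  show ?thesis unfolding DD_def
    by (rule sum.reindex_cong[of Suc]) (auto simp: ip)
qed

lemma DD_diff: "DD X (\<lambda>i. g i - h i) = DD X g - DD X h"
  unfolding DD_def by (simp add: diff_divide_distrib sum_subtractf)

lemma DD_cmult: "DD X (\<lambda>i. a * g i) = a * DD X g"
  unfolding DD_def by (simp add: sum_distrib_left)

lemma DD_sum: "DD X (\<lambda>i. \<Sum>j\<in>J. h j i) = (\<Sum>j\<in>J. DD X (h j))"
  unfolding DD_def by (simp add: sum_divide_distrib sum.swap[of _ J X])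

lemma aux_div: "(c::real) > 0 \<Longrightarrow> c' > 0 \<Longrightarrow> c * D = G / c' \<Longrightarrow> D = G / (c' * c)"
  by (simp add: field_simps)

lemma DD_mvt:
  "\<forall>F G l. (\<forall>j<k. \<forall>y. real l \<le> y \<and> y \<le> real l + real k \<longrightarrow> (G j has_real_derivative G (Suc j) y) (at y))
     \<and> (\<forall>y. G 0 y = F y) \<longrightarrow>
     (\<exists>\<xi>. real l \<le> \<xi> \<and> \<xi> \<le> real l + real k \<and> DD {l..l+k} (\<lambda>i. F (real i)) = G k \<xi> / fact k)"
proof (induction k)
  case 0
  then show ?case by (auto simp: DD_single)
next
  case (Suc k)
  show ?case
  proof (intro allI impI)
    fix F :: "real \<Rightarrow> real" and G :: "nat \<Rightarrow> real \<Rightarrow> real" and l :: nat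
    assume A: "(\<forall>j<Suc k. \<forall>y. real l \<le> y \<and> y \<le> real l + real (Suc k) \<longrightarrow> (G j has_real_derivative G (Suc j) y) (at y))
     \<and> (\<forall>y. G 0 y = F y)"
    define F' where "F' = (\<lambda>y. F (y + 1) - F y)"
    define G' where "G' = (\<lambda>j y. G j (y + 1) - G j y)"
    have chain: "\<forall>j<k. \<forall>y. real l \<le> y \<and> y \<le> real l + real k \<longrightarrow> (G' j has_real_derivative G' (Suc j) y) (at y)"
    proof (intro allI impI)
      fix j y assume j: "j < k" and y: "real l \<le> y \<and> y \<le> real l + real k"
      have d1: "(G j has_real_derivative G (Suc j) (y + 1)) (at (y + 1))" using A j y by auto
      have d2: "(G j has_real_derivative G (Suc j) y) (at y)" using A j y by auto
      have d1': "((\<lambda>y. G j (y + 1)) has_real_derivative G (Suc j) (y + 1)) (at y)"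
        using d1 DERIV_shift by blast
      show "(G' j has_real_derivative G' (Suc j) y) (at y)"
        unfolding G'_def using DERIV_diff[OF d1' d2] by simp
    qed
    have g0: "\<forall>y. G' 0 y = F' y" using A unfolding G'_def F'_def by simp
    obtain \<xi> where xi: "real l \<le> \<xi>" "\<xi> \<le> real l + real k"
        "DD {l..l+k} (\<lambda>i. F' (real i)) = G' k \<xi> / fact k"
      using Suc.IH chain g0 by blast
    have "\<exists>z>\<xi>. z < \<xi> + 1 \<and> G k (\<xi> + 1) - G k \<xi> = (\<xi> + 1 - \<xi>) * G (Suc k) z"
      by (rule MVT2) (use A xi in auto)
    then obtain z where z: "\<xi> < z" "z < \<xi> + 1" "G k (\<xi> + 1) - G k \<xi> = G (Suc k) z" by auto
    have "(real k + 1) * DD {l..Suc (l+k)} (\<lambda>i. F (real i))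
        = DD {Suc l..Suc (l+k)} (\<lambda>i. F (real i)) - DD {l..l+k} (\<lambda>i. F (real i))"
      using DD_cons_rec by simp
    also have "DD {Suc l..Suc (l+k)} (\<lambda>i. F (real i)) = DD {l..l+k} (\<lambda>i. F (real i + 1))"
    proof -
      have "{Suc l..Suc (l+k)} = Suc ` {l..l+k}" by (simp add: image_Suc_atLeastAtMost)
      then show ?thesis using DD_shift[of "{l..l+k}" "\<lambda>i. F (real i)"] by (simp add: add.commute)
    qed
    also have "DD {l..l+k} (\<lambda>i. F (real i + 1)) - DD {l..l+k} (\<lambda>i. F (real i)) = DD {l..l+k} (\<lambda>i. F' (real i))"
      unfolding F'_def by (simp add: DD_diff)
    also have "\<dots> = G (Suc k) z / fact k" using xi z unfolding G'_def by simp
    finally have e: "(real k + 1) * DD {l..Suc (l+k)} (\<lambda>i. F (real i)) = G (Suc k) z / fact k" .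
    have fk: "(fact k :: real) > 0" by simp
    have "DD {l..Suc (l+k)} (\<lambda>i. F (real i)) = G (Suc k) z / (fact k * (real k + 1))"
      using e fk aux_div[of "real k + 1" "fact k"] by simp
    moreover have "(fact (Suc k) :: real) = fact k * (real k + 1)" by (simp add: fact_Suc)
    ultimately have "DD {l..Suc (l+k)} (\<lambda>i. F (real i)) = G (Suc k) z / fact (Suc k)" by simp
    then show "\<exists>\<xi>. real l \<le> \<xi> \<and> \<xi> \<le> real l + real (Suc k) \<and>
           DD {l..l + Suc k} (\<lambda>i. F (real i)) = G (Suc k) \<xi> / fact (Suc k)"
      using xi z by (intro exI[of _ z]) auto
  qed
qed

lemma DD_binom:
  "\<forall>l. DD {l..l+k} (\<lambda>i. real (i choose j)) = (if k \<le> j then real (l choose (j - k)) / fact k else 0)"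
proof (induction k)
  case 0
  then show ?case by (simp add: DD_single)
next
  case (Suc k)
  show ?case
  proof
    fix l
    have e: "(real k + 1) * DD {l..Suc (l+k)} (\<lambda>i. real (i choose j))
        = DD {Suc l..Suc l + k} (\<lambda>i. real (i choose j)) - DD {l..l+k} (\<lambda>i. real (i choose j))"
      using DD_cons_rec[of l k] by simp
    have fk: "(fact k :: real) > 0" by simp
    have IHs: "DD {Suc l..Suc l + k} (\<lambda>i. real (i choose j)) = (if k \<le> j then real (Suc l choose (j - k)) / fact k else 0)"
      by (rule Suc.IH[THEN spec])
    have IHl: "DD {l..l + k} (\<lambda>i. real (i choose j)) = (if k \<le> j then real (l choose (j - k)) / fact k else 0)"
      by (rule Suc.IH[THEN spec])
    have ff: "(fact (Suc k) :: real) = fact k * (real k + 1)" by (simp add: fact_Suc)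
    show "DD {l..l + Suc k} (\<lambda>i. real (i choose j)) =
          (if Suc k \<le> j then real (l choose (j - Suc k)) / fact (Suc k) else 0)"
    proof (cases "Suc k \<le> j")
      case True
      then obtain m where m: "j - k = Suc m" "j - Suc k = m"
        by (metis Suc_diff_le Suc_le_lessD diff_Suc_Suc le_SucE less_imp_le_nat)
      have i1: "DD {Suc l..Suc l + k} (\<lambda>i. real (i choose j)) = real (Suc l choose Suc m) / fact k"
      proof -
        have "DD {Suc l..Suc l + k} (\<lambda>i. real (i choose j)) = (if k \<le> j then real (Suc l choose (j - k)) / fact k else 0)"
          by (rule Suc.IH[THEN spec])
        then show ?thesis using True m by simp
      qed
      have i2: "DD {l..l + k} (\<lambda>i. real (i choose j)) = real (l choose Suc m) / fact k"
      proof -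
        have "DD {l..l + k} (\<lambda>i. real (i choose j)) = (if k \<le> j then real (l choose (j - k)) / fact k else 0)"
          by (rule Suc.IH[THEN spec])
        then show ?thesis using True m by simp
      qed
      have "(real k + 1) * DD {l..Suc (l+k)} (\<lambda>i. real (i choose j)) = real (l choose m) / fact k"
        unfolding e i1 i2 by (simp add: diff_divide_distrib[symmetric])
      then have "DD {l..Suc (l+k)} (\<lambda>i. real (i choose j)) = real (l choose m) / (fact k * (real k + 1))"
        using aux_div[of "real k + 1" "fact k"] fk by simp
      then show ?thesis using True m ff by simp
    next
      case False
      have "(real k + 1) * DD {l..Suc (l+k)} (\<lambda>i. real (i choose j)) = 0"
        unfolding e IHs IHl using False by (cases "k = j") auto
      then show ?thesis using False by simp
    qed
  qed
qed

definition shatters :: "'a set set \<Rightarrow> 'a set \<Rightarrow> bool" where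
  "shatters F Y \<longleftrightarrow> (\<forall>Z\<subseteq>Y. \<exists>A\<in>F. A \<inter> Y = Z)"

lemma sauer_shelah:
  "finite X \<Longrightarrow> \<forall>F d. F \<subseteq> Pow X \<and> (\<forall>Y\<subseteq>X. card Y = Suc d \<longrightarrow> \<not> shatters F Y)
     \<longrightarrow> card F \<le> (card X + 1) ^ d"
proof (induction X rule: finite_induct)
  case empty
  show ?case
  proof (intro allI impI)
    fix F :: "'a set set" and d :: nat
    assume "F \<subseteq> Pow {} \<and> (\<forall>Y\<subseteq>{}. card Y = Suc d \<longrightarrow> \<not> shatters F Y)"
    then have "F \<subseteq> {{}}" by auto
    then have "card F \<le> 1" using card_mono[of "{{}}" F] by simp
    then show "card F \<le> (card {} + 1) ^ d" by simp
  qed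
next
  case (insert x X)
  show ?case
  proof (intro allI impI)
    fix F :: "'a set set" and d :: nat
    assume A: "F \<subseteq> Pow (insert x X) \<and> (\<forall>Y\<subseteq>insert x X. card Y = Suc d \<longrightarrow> \<not> shatters F Y)"
    define Fout where "Fout = {A\<in>F. x \<notin> A}"
    define Fin where "Fin = {B. x \<notin> B \<and> insert x B \<in> F}"
    define F1 where "F1 = Fout \<union> Fin"
    define F2 where "F2 = Fout \<inter> Fin"
    have PX: "finite (Pow X)" using insert.hyps by simp
    have FP: "F \<subseteq> Pow (insert x X)" using A by simp
    have A2: "\<forall>Y\<subseteq>insert x X. card Y = Suc d \<longrightarrow> \<not> shatters F Y" using A by simp
    have s1: "Fout \<subseteq> Pow X"
    proof (rule subsetI)
      fix B assume "B \<in> Fout"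
      then have "B \<subseteq> insert x X" "x \<notin> B" using FP unfolding Fout_def by auto
      then show "B \<in> Pow X" by auto
    qed
    have s2: "Fin \<subseteq> Pow X"
    proof (rule subsetI)
      fix B assume "B \<in> Fin"
      then have "insert x B \<subseteq> insert x X" "x \<notin> B" using FP unfolding Fin_def by auto
      then show "B \<in> Pow X" by auto
    qed
    have fo: "finite Fout" "finite Fin" using finite_subset[OF s1 PX] finite_subset[OF s2 PX] by auto
    have fF: "finite F" using insert.hyps finite_subset[OF FP] by simp
    have cF: "card F = card Fout + card {A\<in>F. x \<in> A}"
    proof -
      have "F = Fout \<union> {A\<in>F. x \<in> A}" unfolding Fout_def by auto
      moreover have "Fout \<inter> {A\<in>F. x \<in> A} = {}" unfolding Fout_def by auto
      moreover have "finite {A\<in>F. x \<in> A}" using fF by simp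
      ultimately show ?thesis using card_Un_disjoint[OF fo(1)] by metis
    qed
    have cin: "card {A\<in>F. x \<in> A} = card Fin"
    proof -
      have e: "{A\<in>F. x \<in> A} = insert x ` Fin"
      proof (rule equalityI)
        show "{A\<in>F. x \<in> A} \<subseteq> insert x ` Fin"
        proof (rule subsetI)
          fix A assume "A \<in> {A\<in>F. x \<in> A}"
          then have a: "A \<in> F" "x \<in> A" by auto
          have aa: "insert x (A - {x}) = A" using a by auto
          have "A - {x} \<in> Fin" unfolding Fin_def using a aa by simp
          then have "insert x (A - {x}) \<in> insert x ` Fin" by (rule imageI)
          then show "A \<in> insert x ` Fin" using aa by simp
        qed
        show "insert x ` Fin \<subseteq> {A\<in>F. x \<in> A}"
        proof (rule subsetI)
          fix A' assume "A' \<in> insert x ` Fin"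
          then obtain B where "A' = insert x B" "B \<in> Fin" by blast
          then show "A' \<in> {A\<in>F. x \<in> A}" unfolding Fin_def by simp
        qed
      qed
      have i: "inj_on (insert x) Fin"
      proof (rule inj_onI)
        fix B B' assume "B \<in> Fin" "B' \<in> Fin" "insert x B = insert x B'"
        then have xb: "x \<notin> B" "x \<notin> B'" and eq: "insert x B = insert x B'" unfolding Fin_def by auto
        have "B = insert x B - {x}" using xb by simp
        also have "\<dots> = insert x B' - {x}" using eq by (simp only:)
        also have "\<dots> = B'" using xb by simp
        finally show "B = B'" .
      qed
      show ?thesis unfolding e by (rule card_image[OF i])
    qed
    have c12: "card F = card F1 + card F2"
      unfolding cF cin F1_def F2_def using card_Un_Int[OF fo] by simp
    have h1: "\<forall>Y\<subseteq>X. card Y = Suc d \<longrightarrow> \<not> shatters F1 Y"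
    proof (intro allI impI notI)
      fix Y assume Y: "Y \<subseteq> X" "card Y = Suc d" and sh: "shatters F1 Y"
      have "shatters F Y" unfolding shatters_def
      proof (intro allI impI)
        fix Z assume "Z \<subseteq> Y"
        then obtain B where B: "B \<in> F1" "B \<inter> Y = Z" using sh unfolding shatters_def by blast
        show "\<exists>A\<in>F. A \<inter> Y = Z"
        proof (cases "B \<in> Fout")
          case True then show ?thesis using B unfolding Fout_def by auto
        next
          case False
          then have "insert x B \<in> F" using B unfolding F1_def Fin_def by auto
          moreover have "insert x B \<inter> Y = Z" using B Y insert.hyps by auto
          ultimately show ?thesis by auto
        qed
      qed
      moreover have "Y \<subseteq> insert x X" using Y by blast
      ultimately show False using A2 Y by blast
    qed
    have "F1 \<subseteq> Pow X" unfolding F1_def using s1 s2 by (rule Un_least)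
    then have IH1: "card F1 \<le> (card X + 1) ^ d"
      using insert.IH h1 by blast
    show "card F \<le> (card (insert x X) + 1) ^ d"
    proof (cases d)
      case 0
      have "F2 = {}"
      proof (rule ccontr)
        assume "F2 \<noteq> {}"
        then obtain B where B: "B \<in> Fout" "B \<in> Fin" unfolding F2_def by auto
        have "shatters F {x}" unfolding shatters_def
        proof (intro allI impI)
          fix Z assume "Z \<subseteq> {x}"
          then have "Z = {} \<or> Z = {x}" by auto
          then show "\<exists>A\<in>F. A \<inter> {x} = Z"
          proof
            assume "Z = {}" then show ?thesis using B unfolding Fout_def by auto
          next
            assume "Z = {x}" then show ?thesis using B unfolding Fin_def by (intro bexI[of _ "insert x B"]) auto
          qed
        qed
        moreover have "{x} \<subseteq> insert x X" "card {x} = Suc d" using 0 by auto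
        ultimately show False using A2 by blast
      qed
      then show ?thesis using c12 IH1 0 by simp
    next
      case (Suc d')
      have h2: "\<forall>Y\<subseteq>X. card Y = Suc d' \<longrightarrow> \<not> shatters F2 Y"
      proof (intro allI impI notI)
        fix Y assume Y: "Y \<subseteq> X" "card Y = Suc d'" and sh: "shatters F2 Y"
        have xY: "x \<notin> Y" using Y insert.hyps by auto
        have fY: "finite Y" using finite_subset[OF Y(1) insert.hyps(1)] .
        have "shatters F (insert x Y)" unfolding shatters_def
        proof (intro allI impI)
          fix Z assume Z: "Z \<subseteq> insert x Y"
          then have "Z - {x} \<subseteq> Y" by blast
          then obtain B where B: "B \<in> F2" "B \<inter> Y = Z - {x}" using sh unfolding shatters_def
            by blast
          have xB: "x \<notin> B" using B unfolding F2_def Fout_def by auto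
          show "\<exists>A\<in>F. A \<inter> insert x Y = Z"
          proof (cases "x \<in> Z")
            case True
            have "insert x B \<in> F" using B unfolding F2_def Fin_def by auto
            moreover have "insert x B \<inter> insert x Y = Z"
            proof -
              have "insert x B \<inter> insert x Y = insert x (B \<inter> Y)" by blast
              also have "\<dots> = insert x (Z - {x})" using B(2) by simp
              also have "\<dots> = Z" using True by blast
              finally show ?thesis .
            qed
            ultimately show ?thesis by blast
          next
            case False
            have "B \<in> F" using B(1) unfolding F2_def Fout_def by simp
            moreover have "B \<inter> insert x Y = Z"
            proof -
              have "B \<inter> insert x Y = B \<inter> Y" using xB by blast
              also have "\<dots> = Z" using B(2) False by blast
              finally show ?thesis .
            qed
            ultimately show ?thesis by blast
          qed
        qed
        moreover have "card (insert x Y) = Suc d" using xY fY Y Suc by simp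
        moreover have "insert x Y \<subseteq> insert x X" using Y by blast
        ultimately show False using A2 by blast
      qed
      have s3: "F2 \<subseteq> Pow X" using s1 unfolding F2_def by auto
      have IH2: "card F2 \<le> (card X + 1) ^ d'"
        using insert.IH h2 s3 by blast
      define n where "n = card X + 1"
      have "card F \<le> n ^ d + n ^ d'" using c12 IH1 IH2 n_def by simp
      also have "\<dots> = (n + 1) * n ^ d'" using Suc by simp
      also have "\<dots> \<le> (n + 1) * (n + 1) ^ d'" by (rule mult_le_mono2, rule power_mono) auto
      also have "\<dots> = (card (insert x X) + 1) ^ d" using Suc n_def insert.hyps by simp
      finally show ?thesis .
    qed
  qed
qed




fun dcoef :: "(nat \<Rightarrow> int) \<Rightarrow> nat \<Rightarrow> int" where
  "dcoef s j = s j - (\<Sum>l<j. int (j choose l) * dcoef s l)"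
declare dcoef.simps[simp del]

lemma dcoef_sum: "(\<Sum>l\<le>j. int (j choose l) * dcoef s l) = s j"
proof -
  have "(\<Sum>l\<le>j. int (j choose l) * dcoef s l) = (\<Sum>l<j. int (j choose l) * dcoef s l) + dcoef s j"
    by (simp add: lessThan_Suc_atMost[symmetric])
  then show ?thesis by (subst (asm) dcoef.simps[of s j]) simp
qed

lemma dcoef_sum_le: "j \<le> q \<Longrightarrow> (\<Sum>l\<le>q. int (j choose l) * dcoef s l) = s j"
proof -
  assume jq: "j \<le> q"
  have "(\<Sum>l\<le>q. int (j choose l) * dcoef s l) = (\<Sum>l\<le>j. int (j choose l) * dcoef s l)"
    by (rule sum.mono_neutral_right) (use jq in auto)
  then show ?thesis using dcoef_sum by simp
qed

locale nn =
  fixes m :: nat and c :: real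
  assumes m2: "m \<ge> 2" and c1: "c > 1" and cZ: "c \<notin> \<int>"
begin

definition q :: nat where "q = nat \<lfloor>c\<rfloor>"
definition r :: nat where "r = Suc q"
definition P :: real where "P = (\<Prod>i<r. c - real i)"

lemma q_lt: "real q < c"
proof -
  have "real q = of_int \<lfloor>c\<rfloor>" unfolding q_def using c1 by simp
  moreover have "of_int \<lfloor>c\<rfloor> \<noteq> c" using cZ by (metis Ints_of_int)
  ultimately show ?thesis by (metis of_int_floor_le order_le_imp_less_or_eq)
qed

lemma r_gt: "c < real r"
proof -
  have "real q = of_int \<lfloor>c\<rfloor>" unfolding q_def using c1 by simp
  moreover have "c < of_int \<lfloor>c\<rfloor> + 1" using floor_correct[of c] by simp
  ultimately show ?thesis unfolding r_def of_nat_Suc by linarith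
qed

lemma P_pos: "P > 0"
  unfolding P_def
proof (rule prod_pos)
  fix i assume "i \<in> {..<r}"
  then have "i \<le> q" unfolding r_def by simp
  then show "0 < c - real i" using q_lt by simp
qed

definition s :: "nat \<Rightarrow> nat \<Rightarrow> int" where "s n j = \<lfloor>real (n + j) powr c\<rfloor>"
definition T :: "nat \<Rightarrow> nat \<Rightarrow> int" where "T n i = (\<Sum>j\<le>q. int (i choose j) * dcoef (s n) j)"
definition psi :: "nat \<Rightarrow> nat \<Rightarrow> real" where "psi n i = real (n + i) powr c - of_int (T n i)"
definition v :: "nat \<Rightarrow> nat \<Rightarrow> int" where "v n i = s n i - T n i"

lemma v_floor: "v n i = \<lfloor>psi n i\<rfloor>"
  unfolding v_def psi_def s_def by simp

lemma T_init: "j \<le> q \<Longrightarrow> T n j = s n j"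
  unfolding T_def by (rule dcoef_sum_le)

lemma DD_T: "DD {l..l+r} (\<lambda>i. of_int (T n i)) = 0"
proof -
  have "(\<lambda>i. (of_int (T n i) :: real)) = (\<lambda>i. \<Sum>j\<le>q. of_int (dcoef (s n) j) * real (i choose j))"
    unfolding T_def by (simp add: mult.commute)
  then have "DD {l..l+r} (\<lambda>i. of_int (T n i)) = (\<Sum>j\<le>q. of_int (dcoef (s n) j) * DD {l..l+r} (\<lambda>i. real (i choose j)))"
    by (simp add: DD_sum DD_cmult)
  also have "\<dots> = 0"
  proof (rule sum.neutral, intro ballI)
    fix j assume "j \<in> {..q}"
    then have "\<not> r \<le> j" unfolding r_def by simp
    then show "of_int (dcoef (s n) j) * DD {l..l+r} (\<lambda>i. real (i choose j)) = 0"
      using DD_binom[of r j] by simp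
  qed
  finally show ?thesis .
qed

lemma DD_f:
  assumes n1: "n \<ge> 1"
  shows "0 < DD {l..l+r} (\<lambda>i. real (n + i) powr c) \<and> DD {l..l+r} (\<lambda>i. real (n + i) powr c) \<le> P * real n powr (c - real r)"
proof -
  define F where "F = (\<lambda>y. (real n + y) powr c)"
  define G where "G = (\<lambda>j y. (\<Prod>i<j. c - real i) * (real n + y) powr (c - real j))"
  have chain: "\<forall>j<r. \<forall>y. real l \<le> y \<and> y \<le> real l + real r \<longrightarrow> (G j has_real_derivative G (Suc j) y) (at y)"
  proof (intro allI impI)
    fix j y assume "j < r" and y: "real l \<le> y \<and> y \<le> real l + real r"
    have pos: "0 < real n + y" using y n1 by simp
    have d0: "((\<lambda>y. real n + y) has_real_derivative 1) (at y)"
      by (auto intro!: derivative_eq_intros)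
    have d1: "((\<lambda>y. (real n + y) powr (c - real j)) has_real_derivative
          (c - real j) * (real n + y) powr (c - real j - real 1) * 1) (at y)"
      using DERIV_fun_powr[OF d0, of "c - real j"] pos by simp
    have d2: "(G j has_real_derivative (\<Prod>i<j. c - real i) * ((c - real j) * (real n + y) powr (c - real j - real 1) * 1)) (at y)"
      unfolding G_def by (rule DERIV_cmult[OF d1])
    have "(\<Prod>i<j. c - real i) * ((c - real j) * (real n + y) powr (c - real j - real 1) * 1) = G (Suc j) y"
      unfolding G_def by (simp add: algebra_simps)
    then show "(G j has_real_derivative G (Suc j) y) (at y)" using d2 by simp
  qed
  have g0: "\<forall>y. G 0 y = F y" unfolding G_def F_def by simp
  obtain \<xi> where xi: "real l \<le> \<xi>" "\<xi> \<le> real l + real r" "DD {l..l+r} (\<lambda>i. F (real i)) = G r \<xi> / fact r"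
    using DD_mvt[of r] chain g0 by blast
  have eqF: "(\<lambda>i. F (real i)) = (\<lambda>i. real (n + i) powr c)" unfolding F_def by simp
  have pos: "0 < real n + \<xi>" using xi n1 by simp
  have Gr: "G r \<xi> = P * (real n + \<xi>) powr (c - real r)" unfolding G_def P_def by simp
  have Gpos: "G r \<xi> > 0" unfolding Gr using P_pos pos by simp
  have "(real n + \<xi>) powr (c - real r) \<le> real n powr (c - real r)"
    by (rule powr_mono2') (use r_gt n1 xi in auto)
  then have Gle: "G r \<xi> \<le> P * real n powr (c - real r)" unfolding Gr using P_pos by simp
  have f1: "(fact r :: real) \<ge> 1" by simp
  have "G r \<xi> / fact r \<le> G r \<xi>" using Gpos f1 by (simp add: divide_le_eq)
  then show ?thesis using xi(3) Gpos Gle unfolding eqF by simp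
qed

lemma DD_psi:
  assumes n1: "n \<ge> 1" and X: "finite X" "card X = Suc r"
  shows "0 \<le> DD X (psi n) \<and> DD X (psi n) \<le> P * real n powr (c - real r)"
proof -
  have H: "\<forall>l. 0 \<le> l \<longrightarrow> l + r \<le> Max X \<longrightarrow> 0 \<le> DD {l..l+r} (psi n) \<and> DD {l..l+r} (psi n) \<le> P * real n powr (c - real r)"
  proof (intro allI impI)
    fix l
    have "DD {l..l+r} (psi n) = DD {l..l+r} (\<lambda>i. real (n + i) powr c) - DD {l..l+r} (\<lambda>i. of_int (T n i))"
      unfolding psi_def by (rule DD_diff)
    then show "0 \<le> DD {l..l+r} (psi n) \<and> DD {l..l+r} (psi n) \<le> P * real n powr (c - real r)"
      using DD_f[OF n1, of l] DD_T[of l n] by simp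
  qed
  have "X \<subseteq> {0..Max X}" using X by auto
  then show ?thesis using DD_bound[OF H] X by blast
qed

end



lemma ipi_real: "real_of_int (ipi X x) = (\<Prod>z\<in>X-{x}. real x - real z)"
  unfolding ipi_def by simp

lemma ipi_abs_ge: "\<bar>real_of_int (ipi X x)\<bar> \<ge> 1"
proof -
  have "ipi X x \<noteq> 0" by (rule ipi_nz)
  then have "\<bar>ipi X x\<bar> \<ge> 1" by linarith
  then show ?thesis by linarith
qed

lemma ipi_abs_le:
  assumes "finite X" "X \<subseteq> {..<K}" "x \<in> X"
  shows "\<bar>real_of_int (ipi X x)\<bar> \<le> real K ^ (card X - 1)"
proof -
  have K1: "real K \<ge> 1" using assms by auto
  have "\<bar>real_of_int (ipi X x)\<bar> = (\<Prod>z\<in>X-{x}. \<bar>real x - real z\<bar>)"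
    unfolding ipi_real by (simp add: abs_prod)
  also have "\<dots> \<le> real K ^ (card X - 1)"
  proof (rule prod_le_power)
    fix z assume "z \<in> X - {x}"
    then have "z < K" "x < K" using assms by auto
    then show "0 \<le> \<bar>real x - real z\<bar> \<and> \<bar>real x - real z\<bar> \<le> real K" by auto
  next
    show "card (X - {x}) \<le> card X - 1" using assms by simp
  qed (rule K1)
  finally show ?thesis .
qed

lemma ipi_max_pos:
  assumes "finite X" "X \<noteq> {}"
  shows "ipi X (Max X) > 0"
  unfolding ipi_def
proof (rule prod_pos)
  fix z assume "z \<in> X - {Max X}"
  then have "z \<le> Max X" "z \<noteq> Max X" using assms by auto
  then have "z < Max X" by simp
  then show "0 < int (Max X) - int z" by simp
qed

lemma floor_abs_le: "\<bar>real_of_int \<lfloor>y\<rfloor>\<bar> \<le> \<bar>y\<bar> + 1"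
proof -
  have "real_of_int \<lfloor>y\<rfloor> \<le> y" "y < real_of_int \<lfloor>y\<rfloor> + 1" by linarith+
  then show ?thesis by linarith
qed

context nn
begin

definition H :: "nat \<Rightarrow> int" where "H K = int (K ^ r * (r + 1) + 1)"
definition Grid :: "nat \<Rightarrow> (nat \<times> int) set" where "Grid K = {0..<K} \<times> {- H K..H K}"
definition S :: "nat \<Rightarrow> nat \<Rightarrow> (nat \<times> int) set" where "S K n = {p \<in> Grid K. snd p \<le> v n (fst p)}"
definition eps :: "nat \<Rightarrow> real" where "eps K = 1 / (real K ^ (r * Suc r) + 1)"
definition good :: "nat \<Rightarrow> nat \<Rightarrow> bool" where
  "good K n \<longleftrightarrow> n \<ge> 1 \<and> P * real n powr (c - real r) \<le> eps K"

lemma eps_le1: "eps K \<le> 1" "eps K > 0"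
proof -
  define a where "a = real K ^ (r * Suc r)"
  have "a \<ge> 0" unfolding a_def by simp
  then have "1 / (a + 1) \<le> 1" "1 / (a + 1) > 0" by (auto simp: divide_le_eq)
  then show "eps K \<le> 1" "eps K > 0" unfolding eps_def a_def by auto
qed

lemma psi_init: "j \<le> q \<Longrightarrow> 0 \<le> psi n j \<and> psi n j < 1"
proof -
  assume "j \<le> q"
  then have "psi n j = real (n + j) powr c - of_int \<lfloor>real (n + j) powr c\<rfloor>"
    unfolding psi_def using T_init s_def by simp
  then show ?thesis by linarith
qed

lemma v_bound:
  assumes g: "good K n" and i: "i < K"
  shows "\<bar>v n i\<bar> \<le> H K"
proof (cases "i \<le> q")
  case True
  then have "v n i = 0" unfolding v_def using T_init by simp
  then show ?thesis unfolding H_def by simp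
next
  case False
  define W where "W = {..q}"
  have iW: "i \<notin> W" using False W_def by simp
  have fW: "finite W" using W_def by simp
  have cX: "card (insert i W) = Suc r" using iW fW unfolding W_def r_def by simp
  have n1: "n \<ge> 1" using g good_def by simp
  have DDb: "0 \<le> DD (insert i W) (psi n) \<and> DD (insert i W) (psi n) \<le> 1"
    using DD_psi[OF n1 _ cX] fW g eps_le1[of K] unfolding good_def by auto
  have ex: "DD (insert i W) (psi n) = psi n i / of_int (ipi W i)
      + (\<Sum>x\<in>W. psi n x / (of_int (ipi W x) * (real x - real i)))"
    by (rule DD_insert_expand[OF fW iW])
  define Sm where "Sm = (\<Sum>x\<in>W. psi n x / (of_int (ipi W x) * (real x - real i)))"
  have Smb: "\<bar>Sm\<bar> \<le> real r"
  proof -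
    have "\<bar>Sm\<bar> \<le> (\<Sum>x\<in>W. \<bar>psi n x / (of_int (ipi W x) * (real x - real i))\<bar>)"
      unfolding Sm_def by (rule sum_abs)
    also have "\<dots> \<le> (\<Sum>x\<in>W. 1)"
    proof (rule sum_mono)
      fix x assume xW: "x \<in> W"
      have p: "0 \<le> psi n x \<and> psi n x < 1" using psi_init xW W_def by simp
      have "x \<noteq> i" using xW iW by auto
      then have d1: "\<bar>real x - real i\<bar> \<ge> 1" by linarith
      have "\<bar>of_int (ipi W x) * (real x - real i)\<bar> \<ge> 1 * 1"
        unfolding abs_mult by (rule mult_mono[OF ipi_abs_ge d1]) auto
      then have "\<bar>psi n x\<bar> / \<bar>of_int (ipi W x) * (real x - real i)\<bar> \<le> 1"
        using p by (simp add: divide_le_eq)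
      then show "\<bar>psi n x / (of_int (ipi W x) * (real x - real i))\<bar> \<le> 1" by (simp add: abs_divide)
    qed
    also have "\<dots> = real r" unfolding W_def r_def by simp
    finally show ?thesis .
  qed
  have nz: "(of_int (ipi W i) :: real) \<noteq> 0" using ipi_nz by simp
  have pe: "psi n i = of_int (ipi W i) * (DD (insert i W) (psi n) - Sm)"
    using ex nz unfolding Sm_def by (simp add: field_simps)
  have ipb: "\<bar>real_of_int (ipi W i)\<bar> \<le> real K ^ r"
  proof -
    have "ipi (insert i W) i = ipi W i" by (rule ipi_insert_self[OF iW])
    moreover have "insert i W \<subseteq> {..<K}" using i False W_def by auto
    ultimately show ?thesis using ipi_abs_le[of "insert i W" K i] fW cX by simp
  qed
  have "\<bar>psi n i\<bar> \<le> real K ^ r * (1 + real r)"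
  proof -
    have "\<bar>DD (insert i W) (psi n) - Sm\<bar> \<le> 1 + real r" using DDb Smb by linarith
    then have "\<bar>psi n i\<bar> \<le> \<bar>real_of_int (ipi W i)\<bar> * (1 + real r)"
      unfolding pe abs_mult by (rule mult_left_mono) simp
    also have "\<dots> \<le> real K ^ r * (1 + real r)" using ipb by (rule mult_right_mono) simp
    finally show ?thesis .
  qed
  then have "\<bar>real_of_int (v n i)\<bar> \<le> real K ^ r * (1 + real r) + 1"
    unfolding v_floor using floor_abs_le[of "psi n i"] by linarith
  also have "\<dots> = real_of_int (H K)" unfolding H_def by (simp add: algebra_simps)
  finally show ?thesis by linarith
qed

end



context nn
begin

lemma S_mem: "p \<in> Grid K \<Longrightarrow> p \<in> S K n \<longleftrightarrow> of_int (snd p) \<le> psi n (fst p)"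
  unfolding S_def v_floor by (simp add: le_floor_iff)

lemma tau_bound:
  fixes tt :: "nat \<Rightarrow> int"
  assumes fX: "finite X" and XK: "X \<subseteq> {..<K}" and cX: "card X = Suc r"
    and tpos: "(\<Sum>x\<in>X. of_int (tt x) / of_int (ipi X x)) > (0::real)"
  shows "(\<Sum>x\<in>X. of_int (tt x) / of_int (ipi X x)) > eps K"
proof -
  define tau where "tau = (\<Sum>x\<in>X. of_int (tt x) / of_int (ipi X x) :: real)"
  define Pi0 where "Pi0 = (\<Prod>y\<in>X. real_of_int (ipi X y))"
  have Pnz: "Pi0 \<noteq> 0" unfolding Pi0_def using fX ipi_nz by simp
  define N where "N = (\<Sum>x\<in>X. tt x * (\<Prod>y\<in>X-{x}. ipi X y))"
  have eqN: "tau * Pi0 = of_int N"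
  proof -
    have "tau * Pi0 = (\<Sum>x\<in>X. of_int (tt x) / of_int (ipi X x) * Pi0)"
      unfolding tau_def by (simp add: sum_distrib_right)
    also have "\<dots> = (\<Sum>x\<in>X. of_int (tt x) * (\<Prod>y\<in>X-{x}. real_of_int (ipi X y)))"
    proof (rule sum.cong[OF refl])
      fix x assume x: "x \<in> X"
      have "Pi0 = real_of_int (ipi X x) * (\<Prod>y\<in>X-{x}. real_of_int (ipi X y))"
        unfolding Pi0_def using prod.remove[OF fX x] by simp
      moreover have "real_of_int (ipi X x) \<noteq> 0" using ipi_nz by simp
      ultimately show "of_int (tt x) / of_int (ipi X x) * Pi0 = of_int (tt x) * (\<Prod>y\<in>X-{x}. real_of_int (ipi X y))"
        by simp
    qed
    also have "\<dots> = of_int N" unfolding N_def by simp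
    finally show ?thesis .
  qed
  have tp: "tau > 0" using tpos tau_def by simp
  have "N \<noteq> 0" using eqN tp Pnz by (metis mult_eq_0_iff of_int_0 less_irrefl)
  then have "\<bar>N\<bar> \<ge> 1" by linarith
  then have "\<bar>real_of_int N\<bar> \<ge> 1" by linarith
  moreover have "\<bar>tau * Pi0\<bar> = tau * \<bar>Pi0\<bar>" using tp by (simp add: abs_mult)
  ultimately have t1: "tau * \<bar>Pi0\<bar> \<ge> 1" using eqN by simp
  have K1: "real K \<ge> 1" using cX XK by (cases "X = {}") auto
  have Pb: "\<bar>Pi0\<bar> \<le> real K ^ (r * Suc r)"
  proof -
    have "\<bar>Pi0\<bar> = (\<Prod>y\<in>X. \<bar>real_of_int (ipi X y)\<bar>)" unfolding Pi0_def by (simp add: abs_prod)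
    also have "\<dots> \<le> (real K ^ r) ^ Suc r"
    proof (rule prod_le_power)
      fix y assume "y \<in> X"
      then show "0 \<le> \<bar>real_of_int (ipi X y)\<bar> \<and> \<bar>real_of_int (ipi X y)\<bar> \<le> real K ^ r"
        using ipi_abs_le[OF fX XK, of y] cX by simp
    next
      show "card X \<le> Suc r" using cX by simp
      show "1 \<le> real K ^ r" using K1 by simp
    qed
    also have "\<dots> = real K ^ (r * Suc r)" by (simp only: power_mult)
    finally show ?thesis .
  qed
  have Ppos: "\<bar>Pi0\<bar> > 0" using Pnz by simp
  have "tau \<ge> 1 / \<bar>Pi0\<bar>" using t1 Ppos by (simp add: divide_le_eq mult.commute)
  moreover have "1 / \<bar>Pi0\<bar> > eps K"
  proof -
    have "\<bar>Pi0\<bar> < real K ^ (r * Suc r) + 1" using Pb by simp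
    then show ?thesis unfolding eps_def using Ppos by (simp add: frac_less2)
  qed
  ultimately show ?thesis unfolding tau_def by simp
qed

lemma noshatter:
  assumes gN: "\<forall>n\<in>Ns. good K n" and YG: "Y \<subseteq> Grid K" and cY: "card Y = Suc r"
  shows "\<not> shatters (S K ` Ns) Y"
proof
  assume sh: "shatters (S K ` Ns) Y"
  have fY: "finite Y" using cY card.infinite by force
  have shZ: "\<And>Z. Z \<subseteq> Y \<Longrightarrow> \<exists>n\<in>Ns. S K n \<inter> Y = Z" using sh unfolding shatters_def by blast
  show False
  proof (cases "inj_on fst Y")
    case False
    then obtain p1 p2 where pp: "p1 \<in> Y" "p2 \<in> Y" "p1 \<noteq> p2" "fst p1 = fst p2" unfolding inj_on_def by auto
    have "snd p1 \<noteq> snd p2" using pp prod_eqI by blast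
    then obtain i a b where ab: "(i,a) \<in> Y" "(i,b) \<in> Y" "a < b"
    proof (cases "snd p1 < snd p2")
      case True
      then show ?thesis using that[of "fst p1" "snd p1" "snd p2"] pp by (metis prod.collapse)
    next
      case False
      then have "snd p2 < snd p1" using \<open>snd p1 \<noteq> snd p2\<close> by simp
      then show ?thesis using that[of "fst p1" "snd p2" "snd p1"] pp by (metis prod.collapse)
    qed
    have "{(i,b)} \<subseteq> Y" using ab by simp
    then obtain n where n: "n \<in> Ns" "S K n \<inter> Y = {(i,b)}" using shZ by blast
    have G: "(i,a) \<in> Grid K" "(i,b) \<in> Grid K" using ab YG by auto
    have "(i,b) \<in> S K n" using n by blast
    then have "of_int b \<le> psi n i" using S_mem[OF G(2)] by simp
    then have "of_int a \<le> psi n i" using ab by linarith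
    then have "(i,a) \<in> S K n" using S_mem[OF G(1)] by simp
    then have "(i,a) \<in> S K n \<inter> Y" using ab by simp
    then show False using n ab by simp
  next
    case True
    define X where "X = fst ` Y"
    have fX: "finite X" unfolding X_def using fY by simp
    have cX: "card X = Suc r" unfolding X_def using card_image[OF True] cY by simp
    have XK: "X \<subseteq> {..<K}" unfolding X_def using YG Grid_def by auto
    define tt where "tt x = (SOME t. (x,t) \<in> Y)" for x
    have ttY: "(x, tt x) \<in> Y" if "x \<in> X" for x
    proof -
      have "\<exists>t. (x,t) \<in> Y" using that unfolding X_def by force
      then show ?thesis unfolding tt_def by (rule someI_ex)
    qed
    have ttp: "tt (fst p) = snd p" if "p \<in> Y" for p
    proof -
      have "(fst p, tt (fst p)) \<in> Y" using ttY that X_def by simp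
      then have "(fst p, tt (fst p)) = p" using True that unfolding inj_on_def by force
      then show ?thesis by (metis snd_conv)
    qed
    have key: "(of_int (tt x) \<le> psi n x) = sel x"
      if n: "S K n \<inter> Y = {p\<in>Y. sel (fst p)}" and x: "x \<in> X" for sel n x
    proof -
      have xy: "(x, tt x) \<in> Y" using ttY x by simp
      then have "(x, tt x) \<in> Grid K" using YG by auto
      then have "(x, tt x) \<in> S K n \<longleftrightarrow> of_int (tt x) \<le> psi n x" using S_mem by simp
      moreover have "(x, tt x) \<in> S K n \<longleftrightarrow> sel x"
      proof -
        have "(x, tt x) \<in> S K n \<longleftrightarrow> (x, tt x) \<in> S K n \<inter> Y" using xy by simp
        also have "\<dots> \<longleftrightarrow> sel x" unfolding n using xy by simp
        finally show ?thesis .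
      qed
      ultimately show ?thesis by simp
    qed
    define tau where "tau = (\<Sum>x\<in>X. of_int (tt x) / of_int (ipi X x) :: real)"
    have Xne: "X \<noteq> {}" using cX by auto
    have mpos: "ipi X (Max X) > 0" by (rule ipi_max_pos[OF fX Xne])
    have MX: "Max X \<in> X" using fX Xne by simp
    show False
    proof (cases "tau \<le> 0")
      case True
      have "{p\<in>Y. ipi X (fst p) < 0} \<subseteq> Y" by auto
      then obtain n where n: "n \<in> Ns" "S K n \<inter> Y = {p\<in>Y. ipi X (fst p) < 0}" using shZ by blast
      have hx: "\<And>x. x \<in> X \<Longrightarrow> (of_int (tt x) \<le> psi n x) = (ipi X x < 0)"
        using key[OF n(2)] by simp
      have "DD X (psi n) < tau" unfolding DD_def tau_def
      proof (rule sum_strict_mono_ex1[OF fX])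
        show "\<forall>x\<in>X. psi n x / real_of_int (ipi X x) \<le> real_of_int (tt x) / real_of_int (ipi X x)"
        proof
          fix x assume x: "x \<in> X"
          show "psi n x / real_of_int (ipi X x) \<le> real_of_int (tt x) / real_of_int (ipi X x)"
          proof (cases "ipi X x < 0")
            case True
            then have "of_int (tt x) \<le> psi n x" using hx[OF x] by simp
            moreover have "real_of_int (ipi X x) \<le> 0" using True by simp
            ultimately show ?thesis by (rule divide_right_mono_neg)
          next
            case False
            then have "\<not> (of_int (tt x) \<le> psi n x)" using hx[OF x] by simp
            then have "psi n x < of_int (tt x)" by simp
            moreover have "real_of_int (ipi X x) > 0" using False ipi_nz[of X x] by simp
            ultimately show ?thesis by (simp add: divide_strict_right_mono less_imp_le)
          qed
        qed
        have "\<not> (of_int (tt (Max X)) \<le> psi n (Max X))" using hx[OF MX] mpos by simp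
        then have "psi n (Max X) < of_int (tt (Max X))" by simp
        then have "psi n (Max X) / real_of_int (ipi X (Max X)) < real_of_int (tt (Max X)) / real_of_int (ipi X (Max X))"
          using mpos by (simp add: divide_strict_right_mono)
        then show "\<exists>a\<in>X. psi n a / real_of_int (ipi X a) < real_of_int (tt a) / real_of_int (ipi X a)"
          using MX by blast
      qed
      moreover have "0 \<le> DD X (psi n)" using DD_psi[OF _ fX cX, of n] gN n good_def by auto
      ultimately show False using True by simp
    next
      case False
      have "{p\<in>Y. ipi X (fst p) > 0} \<subseteq> Y" by auto
      then obtain n where n: "n \<in> Ns" "S K n \<inter> Y = {p\<in>Y. ipi X (fst p) > 0}" using shZ by blast
      have hx: "\<And>x. x \<in> X \<Longrightarrow> (of_int (tt x) \<le> psi n x) = (ipi X x > 0)"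
        using key[OF n(2)] by simp
      have "tau \<le> DD X (psi n)" unfolding DD_def tau_def
      proof (rule sum_mono)
        fix x assume x: "x \<in> X"
        show "real_of_int (tt x) / real_of_int (ipi X x) \<le> psi n x / real_of_int (ipi X x)"
        proof (cases "ipi X x > 0")
          case True
          then have "of_int (tt x) \<le> psi n x" using hx[OF x] by simp
          moreover have "real_of_int (ipi X x) \<ge> 0" using True by simp
          ultimately show ?thesis by (rule divide_right_mono)
        next
          case False
          then have "\<not> (of_int (tt x) \<le> psi n x)" using hx[OF x] by simp
          then have "psi n x < of_int (tt x)" by simp
          moreover have "real_of_int (ipi X x) < 0" using False ipi_nz[of X x] by simp
          ultimately show ?thesis by (simp add: divide_strict_right_mono_neg less_imp_le)
        qed
      qed
      moreover have "tau > eps K" unfolding tau_def by (rule tau_bound[OF fX XK cX]) (use False tau_def in simp)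
      moreover have "DD X (psi n) \<le> eps K" using DD_psi[OF _ fX cX, of n] gN n good_def by auto
      ultimately show False by simp
    qed
  qed
qed

end



lemma dcoef_dvd:
  assumes "\<forall>j\<le>J. (M::int) dvd (s1 j - s2 j)"
  shows "j \<le> J \<Longrightarrow> M dvd (dcoef s1 j - dcoef s2 j)"
proof (induction j rule: less_induct)
  case (less j)
  have "dcoef s1 j - dcoef s2 j = (s1 j - s2 j) - (\<Sum>l<j. int (j choose l) * (dcoef s1 l - dcoef s2 l))"
    by (subst (1 2) dcoef.simps) (simp add: sum_subtractf algebra_simps)
  moreover have "M dvd (s1 j - s2 j)" using assms less.prems by simp
  moreover have "M dvd (\<Sum>l<j. int (j choose l) * (dcoef s1 l - dcoef s2 l))"
    by (rule dvd_sum) (use less in simp)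
  ultimately show ?case by simp
qed

lemma card_factor:
  assumes fin: "finite (g ` A)" and det: "\<And>a b. a \<in> A \<Longrightarrow> b \<in> A \<Longrightarrow> g a = g b \<Longrightarrow> f a = f b"
  shows "card (f ` A) \<le> card (g ` A)"
proof -
  define h where "h y = f (SOME a. a \<in> A \<and> g a = y)" for y
  have "f ` A = h ` (g ` A)"
  proof (rule equalityI)
    show "f ` A \<subseteq> h ` (g ` A)"
    proof (rule subsetI)
      fix y assume "y \<in> f ` A"
      then obtain a where a: "a \<in> A" "y = f a" by blast
      have ex: "\<exists>b. b \<in> A \<and> g b = g a" using a by blast
      have "(SOME b. b \<in> A \<and> g b = g a) \<in> A \<and> g (SOME b. b \<in> A \<and> g b = g a) = g a"
        by (rule someI_ex[OF ex])
      then have "h (g a) = f a" unfolding h_def using det a by metis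
      then show "y \<in> h ` (g ` A)" using a by (metis imageI)
    qed
    show "h ` (g ` A) \<subseteq> f ` A"
    proof (rule subsetI)
      fix y assume "y \<in> h ` (g ` A)"
      then obtain a where a: "a \<in> A" "y = h (g a)" by blast
      have ex: "\<exists>b. b \<in> A \<and> g b = g a" using a by blast
      have "(SOME b. b \<in> A \<and> g b = g a) \<in> A" using someI_ex[OF ex] by blast
      then show "y \<in> f ` A" using a unfolding h_def by blast
    qed
  qed
  then show ?thesis using card_image_le[OF fin, of h] by simp
qed

context nn
begin

definition xx :: "nat \<Rightarrow> nat" where "xx n = nat \<lfloor>real n powr c\<rfloor> mod m"

lemma s_nonneg: "s n j \<ge> 0" unfolding s_def by simp

lemma xx_s: "int (xx (n + j)) = s n j mod int m"
  unfolding xx_def s_def by (simp add: zmod_int)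

lemma v_eq:
  assumes g: "good K n" "good K n'" and SS: "S K n = S K n'" and i: "i < K"
  shows "v n i = v n' i"
proof -
  have *: "\<not> v a i < v b i" if ab: "good K a" "good K b" "S K a = S K b" for a b
  proof
    assume lt: "v a i < v b i"
    define t where "t = v b i"
    have "\<bar>t\<bar> \<le> H K" unfolding t_def using v_bound[OF ab(2) i] .
    then have G: "(i,t) \<in> Grid K" unfolding Grid_def using i by auto
    have "(i,t) \<in> S K b" unfolding S_def using G t_def by simp
    moreover have "(i,t) \<notin> S K a" unfolding S_def using lt t_def by simp
    ultimately show False using ab(3) by simp
  qed
  show ?thesis using *[OF g SS] *[OF g(2,1) SS[symmetric]] by linarith
qed

lemma block_det:
  assumes g: "good K n" "good K n'" and SS: "S K n = S K n'"
    and B: "block_at xx r n = block_at xx r n'"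
  shows "block_at xx K n = block_at xx K n'"
proof -
  have xj: "xx (n + j) = xx (n' + j)" if "j \<le> q" for j
  proof -
    have "j < r" using that r_def by simp
    then show ?thesis using arg_cong[OF B, of "\<lambda>xs. xs ! j"] unfolding block_at_def by simp
  qed
  have sd: "\<forall>j\<le>q. int m dvd (s n j - s n' j)"
  proof (intro allI impI)
    fix j assume "j \<le> q"
    then have "s n j mod int m = s n' j mod int m" using xj xx_s by metis
    then show "int m dvd (s n j - s n' j)" by (simp add: mod_eq_dvd_iff)
  qed
  have dd: "int m dvd (dcoef (s n) j - dcoef (s n') j)" if "j \<le> q" for j
    using dcoef_dvd[OF sd that] .
  have Td: "int m dvd (T n i - T n' i)" for i
  proof -
    have "T n i - T n' i = (\<Sum>j\<le>q. int (i choose j) * (dcoef (s n) j - dcoef (s n') j))"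
      unfolding T_def by (simp add: sum_subtractf algebra_simps)
    moreover have "int m dvd (\<Sum>j\<le>q. int (i choose j) * (dcoef (s n) j - dcoef (s n') j))"
      by (rule dvd_sum) (use dd in simp)
    ultimately show ?thesis by simp
  qed
  have "xx (n + i) = xx (n' + i)" if i: "i < K" for i
  proof -
    have "v n i = v n' i" by (rule v_eq[OF g SS i])
    then have "s n i - s n' i = T n i - T n' i" unfolding v_def by linarith
    then have "int m dvd (s n i - s n' i)" using Td by simp
    then have "s n i mod int m = s n' i mod int m" by (simp add: mod_eq_dvd_iff)
    then have "int (xx (n + i)) = int (xx (n' + i))" using xx_s by simp
    then show ?thesis by simp
  qed
  then show ?thesis unfolding block_at_def by simp
qed

lemma finite_Grid: "finite (Grid K)" unfolding Grid_def by simp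

lemma card_Grid: "card (Grid K) = K * nat (2 * H K + 1)"
  unfolding Grid_def by (simp add: card_cartesian_product)

definition Rs :: "nat list set" where "Rs = {xs. set xs \<subseteq> {0..<m} \<and> length xs = r}"

lemma block_in: "set (block_at xx k n) \<subseteq> {0..<m}" "length (block_at xx k n) = k"
proof -
  have "m > 0" using m2 by simp
  then show "set (block_at xx k n) \<subseteq> {0..<m}" unfolding block_at_def xx_def by auto
  show "length (block_at xx k n) = k" unfolding block_at_def by simp
qed

lemma count_tail:
  assumes gN: "\<forall>n\<ge>N. good K n"
  shows "card ((block_at xx K) ` {N..}) \<le> m ^ r * (card (Grid K) + 1) ^ r"
proof -
  define g where "g n = (block_at xx r n, S K n)" for n
  define F where "F = S K ` {N..}"
  have FP: "F \<subseteq> Pow (Grid K)" unfolding F_def S_def by auto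
  have fF: "finite F" using finite_subset[OF FP] finite_Grid by simp
  have sub: "g ` {N..} \<subseteq> Rs \<times> F" unfolding g_def Rs_def F_def using block_in by auto
  have fR: "finite Rs" unfolding Rs_def using finite_lists_length_eq[of "{0..<m}" r] by simp
  have cR: "card Rs = m ^ r" unfolding Rs_def using card_lists_length_eq[of "{0..<m}" r] by simp
  have fin: "finite (g ` {N..})" using finite_subset[OF sub] fR fF by simp
  have "card ((block_at xx K) ` {N..}) \<le> card (g ` {N..})"
  proof (rule card_factor[OF fin])
    fix a b assume "a \<in> {N..}" "b \<in> {N..}" "g a = g b"
    then show "block_at xx K a = block_at xx K b"
      using block_det[of K a b] gN unfolding g_def by auto
  qed
  also have "\<dots> \<le> card (Rs \<times> F)" by (rule card_mono) (use sub fR fF in auto)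
  also have "\<dots> = m ^ r * card F" using cR by (simp add: card_cartesian_product)
  also have "card F \<le> (card (Grid K) + 1) ^ r"
  proof -
    have "\<forall>Y\<subseteq>Grid K. card Y = Suc r \<longrightarrow> \<not> shatters F Y"
      unfolding F_def using noshatter[of "{N..}" K] gN by auto
    then show ?thesis using sauer_shelah[OF finite_Grid] FP by blast
  qed
  then have "m ^ r * card F \<le> m ^ r * (card (Grid K) + 1) ^ r" by simp
  finally show ?thesis .
qed

lemma count_all:
  assumes gN: "\<forall>n\<ge>N. good K n"
  shows "card (range (block_at xx K)) \<le> N + m ^ r * (card (Grid K) + 1) ^ r"
proof -
  have "(UNIV::nat set) = {..<N} \<union> {N..}" by auto
  then have "range (block_at xx K) = (block_at xx K) ` {..<N} \<union> (block_at xx K) ` {N..}"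
    by (metis image_Un)
  then have "card (range (block_at xx K)) \<le> card ((block_at xx K) ` {..<N}) + card ((block_at xx K) ` {N..})"
    by (simp add: card_Un_le)
  also have "card ((block_at xx K) ` {..<N}) \<le> N" using card_image_le[of "{..<N}"] by simp
  finally show ?thesis using count_tail[OF gN] by simp
qed

end



context nn
begin

definition NN :: "nat \<Rightarrow> nat" where
  "NN K = nat \<lceil>(P * (real K ^ (r * Suc r) + 1)) powr (1 / (real r - c))\<rceil> + 1"

lemma e_pos: "real r - c > 0" using r_gt by simp

lemma good_NN:
  assumes n: "n \<ge> NN K"
  shows "good K n"
proof -
  define A where "A = P * (real K ^ (r * Suc r) + 1)"
  define e where "e = real r - c"
  have ep: "e > 0" using e_pos e_def by simp
  have Ap: "A > 0" unfolding A_def using P_pos by (simp add: add_nonneg_pos)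
  have "real (nat \<lceil>A powr (1 / e)\<rceil>) \<ge> A powr (1 / e)" by linarith
  then have nA: "real n > A powr (1 / e)" using n unfolding NN_def A_def e_def by linarith
  have n1: "n \<ge> 1" using n unfolding NN_def by simp
  have "A powr (1 / e) \<ge> 0" by simp
  then have "(A powr (1 / e)) powr e < real n powr e" using nA ep by (intro powr_less_mono2) auto
  moreover have "(A powr (1 / e)) powr e = A" using ep Ap by (simp add: powr_powr)
  ultimately have An: "A < real n powr e" by simp
  have "P * real n powr (c - real r) = P / real n powr e"
  proof -
    have "c - real r = - e" unfolding e_def by simp
    then show ?thesis by (simp add: powr_minus_divide)
  qed
  also have "\<dots> < P / A"
  proof -
    have "real n powr e > 0" using An Ap by linarith
    then have "0 < real n powr e * A" using Ap by simp
    then show ?thesis by (rule divide_strict_left_mono[OF An P_pos])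
  qed
  also have "P / A = eps K" unfolding A_def eps_def using P_pos by simp
  finally show ?thesis unfolding good_def using n1 by simp
qed

lemma exists_K: "\<exists>K\<ge>1. NN K + m ^ r * (card (Grid K) + 1) ^ r < m ^ K"
proof -
  define a where "a = r * Suc r"
  define s where "s = 1 / (real r - c)"
  define C1 where "C1 = (2 * P) powr s"
  define al where "al = real a * s"
  define e where "e = (r + 1) * r"
  define C3 where "C3 = real m ^ r * (2 * real r + 6) ^ r"
  have sp: "s > 0" unfolding s_def using e_pos by simp
  have ap: "a > 0" unfolding a_def r_def by simp
  have alp: "al > 0" unfolding al_def using sp ap by simp
  have lim: "((\<lambda>K::nat. (C1 * real K powr al + 2 + C3 * real K ^ e) / real m ^ K) \<longlongrightarrow> 0) at_top"
    using alp m2 by real_asymp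
  have "eventually (\<lambda>K::nat. K \<ge> 1) at_top" by (rule eventually_ge_at_top)
  moreover have "eventually (\<lambda>K. (C1 * real K powr al + 2 + C3 * real K ^ e) / real m ^ K < 1) at_top"
    using order_tendstoD(2)[OF lim] by simp
  ultimately have "eventually (\<lambda>K. K \<ge> 1 \<and> (C1 * real K powr al + 2 + C3 * real K ^ e) / real m ^ K < 1) at_top"
    by (rule eventually_conj)
  then obtain K0 where K0: "\<forall>K\<ge>K0. K \<ge> 1 \<and> (C1 * real K powr al + 2 + C3 * real K ^ e) / real m ^ K < 1"
    unfolding eventually_at_top_linorder by blast
  then have "K0 \<ge> 1 \<and> (C1 * real K0 powr al + 2 + C3 * real K0 ^ e) / real m ^ K0 < 1" by blast
  then obtain K where K: "K \<ge> 1" "(C1 * real K powr al + 2 + C3 * real K ^ e) / real m ^ K < 1"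
    by blast
  have mK: "real m ^ K > 0" using m2 by simp
  have main: "C1 * real K powr al + 2 + C3 * real K ^ e < real m ^ K" using K(2) mK by (simp add: divide_less_eq)
  have Kp: "real K > 0" using K by simp
  have b1: "real (NN K) \<le> C1 * real K powr al + 2"
  proof -
    define y where "y = (P * (real K ^ a + 1)) powr s"
    have y0: "y \<ge> 0" unfolding y_def by simp
    have "real (NN K) = real (nat \<lceil>y\<rceil>) + 1" unfolding NN_def y_def a_def s_def by simp
    also have "real (nat \<lceil>y\<rceil>) \<le> y + 1" using y0 by linarith
    finally have "real (NN K) \<le> y + 2" by simp
    moreover have "y \<le> C1 * real K powr al"
    proof -
      have "real K ^ a \<ge> 1" using K by simp
      then have h: "P * (real K ^ a + 1) \<le> 2 * P * real K ^ a" using P_pos by (simp add: algebra_simps)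
      have "y \<le> (2 * P * real K ^ a) powr s" unfolding y_def
        by (rule powr_mono2[OF _ _ h]) (use sp P_pos in auto)
      also have "\<dots> = (2 * P) powr s * (real K ^ a) powr s" using P_pos by (simp add: powr_mult)
      also have "(real K ^ a) powr s = real K powr al"
      proof -
        have "real K ^ a = real K powr real a" using Kp by (simp add: powr_realpow)
        then show ?thesis unfolding al_def by (simp add: powr_powr)
      qed
      finally show ?thesis unfolding C1_def .
    qed
    ultimately show ?thesis by simp
  qed
  have b2: "real (m ^ r * (card (Grid K) + 1) ^ r) \<le> C3 * real K ^ e"
  proof -
    define Y where "Y = K ^ (r + 1)"
    have Y1: "K \<le> Y" "1 \<le> Y" unfolding Y_def using K by (simp_all add: self_le_power)
    have cG: "card (Grid K) + 1 = 2 * (r + 1) * Y + 3 * K + 1"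
    proof -
      have "2 * H K + 1 = int (2 * (K ^ r * (r + 1) + 1) + 1)" unfolding H_def by simp
      then have "nat (2 * H K + 1) = 2 * (K ^ r * (r + 1) + 1) + 1" by (simp only: nat_int)
      then show ?thesis unfolding card_Grid Y_def by (simp add: algebra_simps)
    qed
    have e6: "(2 * r + 6) * Y = 2 * (r + 1) * Y + 4 * Y" by (simp add: algebra_simps)
    have "card (Grid K) + 1 \<le> (2 * r + 6) * Y" unfolding cG e6 using Y1 by linarith
    then have "(card (Grid K) + 1) ^ r \<le> ((2 * r + 6) * Y) ^ r" by (rule power_mono) simp
    also have "\<dots> = (2 * r + 6) ^ r * K ^ e" unfolding Y_def e_def by (simp only: power_mult_distrib power_mult)
    finally have "m ^ r * (card (Grid K) + 1) ^ r \<le> m ^ r * ((2 * r + 6) ^ r * K ^ e)" by simp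
    then have "real (m ^ r * (card (Grid K) + 1) ^ r) \<le> real (m ^ r * ((2 * r + 6) ^ r * K ^ e))"
      by (simp only: of_nat_le_iff)
    then show ?thesis unfolding C3_def by simp
  qed
  have "real (NN K + m ^ r * (card (Grid K) + 1) ^ r) < real (m ^ K)"
    using b1 b2 main by simp
  then show ?thesis using K(1) by (intro exI[of _ K]) (simp only: of_nat_less_iff)
qed

lemma missing: "\<exists>K>0. \<exists>B. length B = K \<and> set B \<subseteq> {0..<m} \<and> (\<forall>n. block_at xx K n \<noteq> B)"
proof -
  obtain K where K: "K \<ge> 1" "NN K + m ^ r * (card (Grid K) + 1) ^ r < m ^ K" using exists_K by blast
  have gN: "\<forall>n\<ge>NN K. good K n" using good_NN by blast
  have c: "card (range (block_at xx K)) < m ^ K" using count_all[OF gN] K(2) by linarith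
  define L where "L = {xs. set xs \<subseteq> {0..<m} \<and> length xs = K}"
  have fL: "finite L" unfolding L_def using finite_lists_length_eq[of "{0..<m}" K] by simp
  have cL: "card L = m ^ K" unfolding L_def using card_lists_length_eq[of "{0..<m}" K] by simp
  have sub: "range (block_at xx K) \<subseteq> L" unfolding L_def using block_in by auto
  have "range (block_at xx K) \<noteq> L" using c cL by auto
  then obtain B where B: "B \<in> L" "B \<notin> range (block_at xx K)" using sub by blast
  have "length B = K" "set B \<subseteq> {0..<m}" using B(1) unfolding L_def by auto
  moreover have "\<forall>n. block_at xx K n \<noteq> B" using B(2) by auto
  moreover have "K > 0" using K(1) by simp
  ultimately show ?thesis by blast
qed

end


theorem theorem2:
  fixes m :: nat and c :: real
  assumes "m \<ge> 2" and "c > 1" and "c \<notin> \<int>"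
  defines "x \<equiv> (\<lambda>n::nat. nat \<lfloor>(real n) powr c\<rfloor> mod m)"
  shows "\<not> normal_seq m x \<and>
         (\<exists>k>0. \<exists>B. length B = k \<and> set B \<subseteq> {0..<m} \<and>
            (\<forall>n. block_at x k n \<noteq> B))"
proof -
  interpret L: nn m c using assms(1-3) by unfold_locales
  have xe: "x = L.xx" unfolding x_def by (simp add: fun_eq_iff L.xx_def)
  obtain K B where KB: "K > 0" "length B = K" "set B \<subseteq> {0..<m}" "\<forall>n. block_at L.xx K n \<noteq> B"
    using L.missing by blast
  have nn: "\<not> normal_seq m x"
  proof
    assume "normal_seq m x"
    then have "k_normal m K x" using KB unfolding normal_seq_def by simp
    then have lim: "(\<lambda>N. real (card {n. n < N \<and> block_at x K n = B}) / real N) \<longlonglongrightarrow> 1 / real m ^ K"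
      using KB unfolding k_normal_def by blast
    have e: "{n. n < N \<and> block_at x K n = B} = {}" for N using KB xe by auto
    have "(\<lambda>N. real (card {n. n < N \<and> block_at x K n = B}) / real N) = (\<lambda>N. 0)"
      unfolding e by simp
    then have "(\<lambda>N::nat. 0::real) \<longlonglongrightarrow> 1 / real m ^ K" using lim by simp
    then have "1 / real m ^ K = 0" using LIMSEQ_unique tendsto_const by blast
    then show False using assms(1) by simp
  qed
  show ?thesis using nn KB xe by blast
qed

end
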